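(* Let $\lambda\in\mathbb{R}$, let $r\ge0$ be an integer and let $z\in\mathbb{C}$. Then, as formal power series in $t$, \[ \sum_{n=0}^{\infty}\phi_{n,\lambda}^{(r)}(|z|^2)\frac{t^n}{n!}=\langle z|\,e_\lambda^{a^{\dagger}a+r}(t)\,|z\rangle=e_\lambda^{r}(t)\,e^{|z|^2(e_\lambda(t)-1)}. \]
   Context: Notation: $(x)_0=1$, $(x)_m=x(x-1)\cdots(x-m+1)$; $(y)_{0,\lambda}=1$, $(y)_{n,\lambda}=y(y-\lambda)\cdots(y-(n-1)\lambda)$ (also for operators $y$). The degenerate exponential is $e_\lambda^{x}(t)=\sum_{k\ge0}(x)_{k,\lambda}\frac{t^k}{k!}$ (i.e. $(1+\lambda t)^{x/\lambda}$), $e_\lambda(t)=e_\lambda^1(t)$, and for an operator $X$, $e_\lambda^{X}(t)=\sum_{n\ge0}(X)_{n,\lambda}\frac{t^n}{n!}$. The degenerate $r$-Stirling numbers of the second kind ${n+r\brace k+r}_{r,\lambda}$ are defined by $(x+r)_{n,\lambda}=\sum_{k=0}^{n}{n+r\brace k+r}_{r,\lambda}(x)_k$ ($n\ge0$), and the degenerate $r$-Bell polynomials are $\phi_{n,\lambda}^{(r)}(x)=\sum_{k=0}^{n}{n+r\brace k+r}_{r,\lambda}x^k$. The boson operators $a,a^{\dagger}$ satisfy $[a,a^{\dagger}]=1$ and act on orthonormal number states $|m\rangle$ by $a|m\rangle=\sqrt{m}|m-1\rangle$, $a^{\dagger}|m\rangle=\sqrt{m+1}|m+1\rangle$; the coherent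 state is $|z\rangle=e^{-|z|^2/2}\sum_{n\ge0}\frac{z^n}{\sqrt{n!}}|n\rangle$, with $a|z\rangle=z|z\rangle$, $\langle z|z\rangle=1$. *)

theory Defs
  imports "HOL-Analysis.Analysis" "HOL-Computational_Algebra.Formal_Power_Series"
begin

definition ffall :: "real \<Rightarrow> nat \<Rightarrow> real" where
  "ffall x m = (\<Prod>k<m. x - of_nat k)"

definition dfall :: "real \<Rightarrow> real \<Rightarrow> nat \<Rightarrow> real" where
  "dfall lam y n = (\<Prod>k<n. y - of_nat k * lam)"

(* degenerate r-Stirling numbers of the second kind {n+r, k+r}_{r,lambda}:
   the unique coefficients with (x+r)_{n,lambda} = sum_{k=0}^n S(n,k) (x)_k for all x *)
definition deg_rstirling2 :: "real \<Rightarrow> nat \<Rightarrow> nat \<Rightarrow> nat \<Rightarrow> real" where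
  "deg_rstirling2 lam r n =
     (THE S. (\<forall>x::real. dfall lam (x + real r) n = (\<Sum>k\<le>n. S k * ffall x k))
             \<and> (\<forall>k>n. S k = 0))"

definition deg_rbell :: "real \<Rightarrow> nat \<Rightarrow> nat \<Rightarrow> real \<Rightarrow> real" where
  "deg_rbell lam r n x = (\<Sum>k\<le>n. deg_rstirling2 lam r n k * x ^ k)"

(* Fock space: a state is given by its coefficients w.r.t. the orthonormal number states |m> *)
type_synonym state = "nat \<Rightarrow> complex"

(* annihilation operator a: a|m> = sqrt m |m-1> *)
definition ann :: "state \<Rightarrow> state" where
  "ann \<psi> = (\<lambda>m. complex_of_real (sqrt (real (Suc m))) * \<psi> (Suc m))"

(* creation operator a^dagger: a^dagger|m> = sqrt(m+1) |m+1> *)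
definition cre :: "state \<Rightarrow> state" where
  "cre \<psi> = (\<lambda>m. if m = 0 then 0 else complex_of_real (sqrt (real m)) * \<psi> (m - 1))"

definition braket :: "state \<Rightarrow> state \<Rightarrow> complex" where
  "braket \<phi> \<psi> = (\<Sum>m. cnj (\<phi> m) * \<psi> m)"

definition coherent :: "complex \<Rightarrow> state" where
  "coherent z = (\<lambda>n. complex_of_real (exp (- ((cmod z) ^ 2) / 2)) * z ^ n
                      / complex_of_real (sqrt (fact n :: real)))"

primrec op_dfall :: "real \<Rightarrow> (state \<Rightarrow> state) \<Rightarrow> nat \<Rightarrow> state \<Rightarrow> state" where
  "op_dfall lam X 0 = id"
| "op_dfall lam X (Suc n) =
     (\<lambda>\<psi>. (\<lambda>m. X \<psi> m - complex_of_real (real n * lam) * \<psi> m)) \<circ> op_dfall lam X n"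

definition dexp_fps :: "real \<Rightarrow> real \<Rightarrow> complex fps" where
  "dexp_fps lam x = Abs_fps (\<lambda>k. complex_of_real (dfall lam x k / fact k))"

end

theory Submission
  imports Defs
begin


lemma ffall_Suc: "ffall x (Suc k) = ffall x k * (x - of_nat k)"
  by (simp add: ffall_def lessThan_Suc)

lemma dfall_Suc: "dfall lam x (Suc k) = dfall lam x k * (x - of_nat k * lam)"
  by (simp add: dfall_def lessThan_Suc)

lemma ffall_nat_choose: "ffall (real m) k = real (m choose k) * fact k"
proof -
  have "real (m choose k) = (real m gchoose k)" by (simp add: binomial_gbinomial)
  also have "\<dots> = ffall (real m) k / fact k"
    by (simp add: gbinomial_prod_rev ffall_def atLeast0LessThan)
  finally show ?thesis by simp
qed

lemma ffall_nat_coef: "ffall (real m) k / fact m = (if k \<le> m then 1 / fact (m - k) else 0)"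
proof (cases "k \<le> m")
  case True
  have "real (m choose k) = fact m / (fact k * fact (m - k))"
    using binomial_fact[OF True] by simp
  then show ?thesis using True by (simp add: ffall_nat_choose field_simps)
qed (simp add: ffall_nat_choose)

lemma X_apply:
  "cre (ann \<psi>) m + of_nat r * \<psi> m = of_nat (m + r) * \<psi> m"
proof (cases m)
  case 0 then show ?thesis by (simp add: cre_def)
next
  case (Suc j)
  have "complex_of_real (sqrt (real (Suc j))) * complex_of_real (sqrt (real (Suc j))) = of_nat (Suc j)"
    by (simp only: of_real_mult[symmetric] real_sqrt_mult_self) simp
  moreover have "cre (ann \<psi>) (Suc j) = complex_of_real (sqrt (real (Suc j))) * (complex_of_real (sqrt (real (Suc j))) * \<psi> (Suc j))"
    by (simp only: cre_def ann_def) simp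
  ultimately show ?thesis using Suc by (simp only: mult.assoc[symmetric]) (simp add: distrib_right)
qed

lemma op_dfall_apply:
  assumes X: "\<And>\<phi> j. X \<phi> j = of_nat (j + r) * \<phi> j"
  shows "op_dfall lam X n \<psi> m = complex_of_real (dfall lam (real m + real r) n) * \<psi> m"
proof (induction n arbitrary: m)
  case 0 then show ?case by (simp add: dfall_def)
next
  case (Suc n)
  have "op_dfall lam X (Suc n) \<psi> m = X (op_dfall lam X n \<psi>) m - of_real (real n * lam) * op_dfall lam X n \<psi> m" by simp
  also have "X (op_dfall lam X n \<psi>) m = of_nat (m+r) * op_dfall lam X n \<psi> m" by (rule X)
  finally show ?case by (simp add: Suc.IH dfall_Suc algebra_simps)
qed



lemma ffall_ser: "(\<lambda>m. ffall (real m) k * (x^m / fact m)) sums (x^k * exp x)"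
proof -
  have f: "ffall (real m) k * (x^m / fact m) = (if k \<le> m then x^m / fact (m - k) else 0)" for m
    using ffall_nat_coef[of m k] by (auto simp: field_simps split: if_splits)
  have "(\<lambda>i. x^k * (x^i /\<^sub>R fact i)) sums (x^k * exp x)"
    by (intro sums_mult exp_converges)
  moreover have "(\<lambda>i. (\<lambda>m. ffall (real m) k * (x^m / fact m)) (i + k)) = (\<lambda>i. x^k * (x^i /\<^sub>R fact i))"
  proof
    fix i show "(\<lambda>m. ffall (real m) k * (x^m / fact m)) (i + k) = x^k * (x^i /\<^sub>R fact i)"
      apply (simp only: f)
      by (simp add: power_add divide_inverse mult_ac)
  qed
  ultimately have "(\<lambda>i. (\<lambda>m. ffall (real m) k * (x^m / fact m)) (i + k)) sums (x^k * exp x)"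
    by simp
  then have "(\<lambda>m. ffall (real m) k * (x^m / fact m)) sums (x^k * exp x + (\<Sum>i<k. ffall (real i) k * (x^i / fact i)))"
    using sums_iff_shift[of "\<lambda>m. ffall (real m) k * (x^m / fact m)" k "x^k * exp x"] by blast
  moreover have "(\<Sum>i<k. ffall (real i) k * (x^i / fact i)) = 0"
    by (intro sum.neutral ballI) (simp only: f, simp)
  ultimately show ?thesis by simp
qed

lemma coh_sq: "cnj (coherent z m) * coherent z m
   = complex_of_real (exp (- (cmod z ^ 2)) * (cmod z ^ 2) ^ m / fact m)"
proof -
  have n: "cmod (coherent z m) = exp (- ((cmod z) ^ 2) / 2) * cmod z ^ m / sqrt (fact m)"
    by (simp add: coherent_def norm_mult norm_divide norm_power)
  have "cnj (coherent z m) * coherent z m = coherent z m * cnj (coherent z m)"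
    by (rule mult.commute)
  also have "\<dots> = complex_of_real (cmod (coherent z m) ^ 2)"
    by (rule complex_norm_square[symmetric])
  also have "cmod (coherent z m) ^ 2 = exp (- (cmod z ^ 2)) * (cmod z ^ 2) ^ m / fact m"
  proof -
    have "exp (- ((cmod z) ^ 2) / 2) ^ 2 = exp (- (cmod z ^ 2))"
      by (simp add: power2_eq_square exp_add[symmetric])
    then show ?thesis unfolding n
      by (simp add: power_mult_distrib power_divide power_mult[symmetric] mult.commute)
  qed
  finally show ?thesis .
qed

lemma braket_diag:
  fixes d :: "nat \<Rightarrow> real" and S :: "nat \<Rightarrow> real"
  assumes d: "\<And>m. d m = (\<Sum>k\<le>n. S k * ffall (real m) k)"
  shows "braket (coherent z) (\<lambda>m. complex_of_real (d m) * coherent z m)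
         = complex_of_real (\<Sum>k\<le>n. S k * (cmod z ^ 2) ^ k)"
proof -
  define x where "x = cmod z ^ 2"
  have "(\<lambda>m. \<Sum>k\<le>n. S k * (ffall (real m) k * (x^m / fact m))) sums (\<Sum>k\<le>n. S k * (x^k * exp x))"
    by (intro sums_sum sums_mult ffall_ser)
  then have "(\<lambda>m. d m * (x^m / fact m)) sums ((\<Sum>k\<le>n. S k * x^k) * exp x)"
    by (simp add: d sum_distrib_right sum_distrib_left mult_ac)
  then have "(\<lambda>m. exp (-x) * (d m * (x^m / fact m))) sums (exp (-x) * ((\<Sum>k\<le>n. S k * x^k) * exp x))"
    by (rule sums_mult)
  then have "(\<lambda>m. exp (-x) * (d m * (x^m / fact m))) sums (\<Sum>k\<le>n. S k * x^k)"
    by (simp add: exp_minus field_simps)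
  then have "(\<lambda>m. complex_of_real (exp (-x) * (d m * (x^m / fact m)))) sums complex_of_real (\<Sum>k\<le>n. S k * x^k)"
    by (simp only: sums_of_real_iff)
  moreover have "cnj (coherent z m) * (complex_of_real (d m) * coherent z m)
      = complex_of_real (exp (-x) * (d m * (x^m / fact m)))" for m
  proof -
    have "cnj (coherent z m) * (complex_of_real (d m) * coherent z m) = complex_of_real (d m) * (cnj (coherent z m) * coherent z m)"
      by (simp add: mult_ac)
    also have "\<dots> = complex_of_real (exp (-x) * (d m * (x^m / fact m)))"
      by (simp only: coh_sq x_def of_real_mult[symmetric]) (simp add: mult_ac)
    finally show ?thesis .
  qed
  ultimately show ?thesis unfolding braket_def x_def by (simp add: sums_iff)
qed



fun Srec :: "real \<Rightarrow> nat \<Rightarrow> nat \<Rightarrow> nat \<Rightarrow> real" where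
  "Srec lam r 0 k = (if k = 0 then 1 else 0)"
| "Srec lam r (Suc n) k = (if k = 0 then 0 else Srec lam r n (k - 1))
      + (real k + real r - real n * lam) * Srec lam r n k"

lemma Srec_zero: "n < k \<Longrightarrow> Srec lam r n k = 0"
  by (induction n arbitrary: k) auto

lemma Srec_eq: "dfall lam (x + real r) n = (\<Sum>k\<le>n. Srec lam r n k * ffall x k)"
proof (induction n)
  case 0 then show ?case by (simp add: dfall_def ffall_def)
next
  case (Suc n)
  let ?S = "Srec lam r n"
  have "dfall lam (x + real r) (Suc n) = (\<Sum>k\<le>n. ?S k * ffall x k) * (x + real r - real n * lam)"
    by (simp add: dfall_Suc Suc.IH)
  also have "\<dots> = (\<Sum>k\<le>n. ?S k * ffall x (Suc k)) + (\<Sum>k\<le>n. (real k + real r - real n * lam) * ?S k * ffall x k)"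
    by (simp only: sum_distrib_right sum.distrib[symmetric]) (rule sum.cong, simp_all add: ffall_Suc algebra_simps)
  also have "(\<Sum>k\<le>n. ?S k * ffall x (Suc k)) = (\<Sum>k\<le>Suc n. (if k = 0 then 0 else ?S (k - 1)) * ffall x k)"
    by (simp only: sum.atMost_Suc_shift) simp
  also have "(\<Sum>k\<le>n. (real k + real r - real n * lam) * ?S k * ffall x k)
      = (\<Sum>k\<le>Suc n. (real k + real r - real n * lam) * ?S k * ffall x k)"
    by (simp add: Srec_zero)
  also have "(\<Sum>k\<le>Suc n. (if k = 0 then 0 else ?S (k - 1)) * ffall x k) + \<dots>
     = (\<Sum>k\<le>Suc n. Srec lam r (Suc n) k * ffall x k)"
    by (simp add: sum.distrib[symmetric] algebra_simps)
  finally show ?case .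
qed

lemma ffall_nat_gt: "j < k \<Longrightarrow> ffall (real j) k = 0"
  by (simp add: ffall_nat_choose)

lemma ffall_nat_same: "ffall (real j) j = fact j"
  by (simp add: ffall_nat_choose)

lemma ffall_uniq:
  fixes A B :: "nat \<Rightarrow> complex"
  assumes "\<And>j. j \<le> n \<Longrightarrow> (\<Sum>k\<le>n. A k * complex_of_real (ffall (real j) k))
                         = (\<Sum>k\<le>n. B k * complex_of_real (ffall (real j) k))"
  shows "k \<le> n \<Longrightarrow> A k = B k"
proof (induction k rule: less_induct)
  case (less k)
  have "(\<Sum>i\<le>n. (A i - B i) * complex_of_real (ffall (real k) i)) = 0"
    using assms[OF less.prems] by (simp add: algebra_simps sum_subtractf)
  moreover have "(\<Sum>i\<le>n. (A i - B i) * complex_of_real (ffall (real k) i))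
       = (A k - B k) * complex_of_real (ffall (real k) k)"
  proof (rule sum.remove[THEN trans])
    show "finite {..n}" by simp
    show "k \<in> {..n}" using less.prems by simp
    show "(A k - B k) * complex_of_real (ffall (real k) k) +
      (\<Sum>i\<in>{..n} - {k}. (A i - B i) * complex_of_real (ffall (real k) i)) =
      (A k - B k) * complex_of_real (ffall (real k) k)"
    proof -
      have "(\<Sum>i\<in>{..n} - {k}. (A i - B i) * complex_of_real (ffall (real k) i)) = 0"
      proof (intro sum.neutral ballI)
        fix i assume i: "i \<in> {..n} - {k}"
        show "(A i - B i) * complex_of_real (ffall (real k) i) = 0"
        proof (cases "i < k")
          case True then show ?thesis using less.IH[of i] less.prems by simp
        next
          case False then show ?thesis using i by (simp add: ffall_nat_gt)
        qed
      qed
      then show ?thesis by simp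
    qed
  qed
  ultimately show ?case by (simp add: ffall_nat_same)
qed

lemma deg_rstirling2_eq: "deg_rstirling2 lam r n = Srec lam r n"
  unfolding deg_rstirling2_def
proof (rule the_equality)
  show "(\<forall>x. dfall lam (x + real r) n = (\<Sum>k\<le>n. Srec lam r n k * ffall x k)) \<and> (\<forall>k>n. Srec lam r n k = 0)"
    by (simp add: Srec_eq Srec_zero)
next
  fix S assume S: "(\<forall>x. dfall lam (x + real r) n = (\<Sum>k\<le>n. S k * ffall x k)) \<and> (\<forall>k>n. S k = 0)"
  show "S = Srec lam r n"
  proof
    fix k show "S k = Srec lam r n k"
    proof (cases "k \<le> n")
      case True
      have "complex_of_real (S k) = complex_of_real (Srec lam r n k)"
      proof (rule ffall_uniq[OF _ True])
        fix j
        have "(\<Sum>k\<le>n. S k * ffall (real j) k) = (\<Sum>k\<le>n. Srec lam r n k * ffall (real j) k)"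
          using S Srec_eq[of lam "real j" r n] by simp
        then have "complex_of_real (\<Sum>k\<le>n. S k * ffall (real j) k) = complex_of_real (\<Sum>k\<le>n. Srec lam r n k * ffall (real j) k)"
          by simp
        then show "(\<Sum>k\<le>n. complex_of_real (S k) * complex_of_real (ffall (real j) k)) =
            (\<Sum>k\<le>n. complex_of_real (Srec lam r n k) * complex_of_real (ffall (real j) k))"
          by simp
      qed
      then show ?thesis by simp
    next
      case False then show ?thesis using S Srec_zero by simp
    qed
  qed
qed


unbundle no vec_syntax
unbundle fps_syntax




lemma dexp_nth: "dexp_fps lam x $ n = complex_of_real (dfall lam x n / fact n)"
  by (simp add: dexp_fps_def)

lemma ode_nth:
  "((1 + fps_const l * fps_X) * fps_deriv F) $ n = of_nat (n+1) * F $ Suc n + l * of_nat n * F $ n"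
proof (cases n)
  case 0 then show ?thesis by (simp add: algebra_simps)
next
  case (Suc m)
  have "((1 + fps_const l * fps_X) * fps_deriv F) $ n = fps_deriv F $ n + l * ((fps_X * fps_deriv F) $ n)"
    by (simp add: algebra_simps)
  then show ?thesis using Suc by (simp add: algebra_simps)
qed

lemma dexp_ode:
  "(1 + fps_const (complex_of_real lam) * fps_X) * fps_deriv (dexp_fps lam a)
     = fps_const (complex_of_real a) * dexp_fps lam a"
proof (rule fps_ext)
  fix n
  have "real (n+1) * (dfall lam a (Suc n) / fact (Suc n)) + lam * real n * (dfall lam a n / fact n)
        = a * (dfall lam a n / fact n)"
  proof -
    have L: "(x::real) \<noteq> 0 \<Longrightarrow> x * (D / (x * F)) = D / F" for x D F
      by (cases "F = 0") (simp_all add: field_simps)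
    have "real (n+1) * (dfall lam a (Suc n) / fact (Suc n)) = dfall lam a (Suc n) / fact n"
      unfolding fact_Suc of_nat_Suc[symmetric] Suc_eq_plus1[symmetric] by (rule L) simp
    then show ?thesis by (simp add: dfall_Suc field_simps)
  qed
  note R = this
  have "((1 + fps_const (complex_of_real lam) * fps_X) * fps_deriv (dexp_fps lam a)) $ n
     = of_nat (n+1) * dexp_fps lam a $ Suc n + complex_of_real lam * of_nat n * dexp_fps lam a $ n"
    by (rule ode_nth)
  also have "\<dots> = complex_of_real (real (n+1) * (dfall lam a (Suc n) / fact (Suc n)) + lam * real n * (dfall lam a n / fact n))"
    by (simp only: dexp_nth of_real_add of_real_mult of_real_of_nat_eq)
  also have "\<dots> = complex_of_real (a * (dfall lam a n / fact n))" by (simp only: R)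
  also have "\<dots> = (fps_const (complex_of_real a) * dexp_fps lam a) $ n" by (simp add: dexp_nth)
  finally show "((1 + fps_const (complex_of_real lam) * fps_X) * fps_deriv (dexp_fps lam a)) $ n
     = (fps_const (complex_of_real a) * dexp_fps lam a) $ n" .
qed

lemma dexp_unique:
  assumes F0: "F $ 0 = 1"
    and ode: "(1 + fps_const (complex_of_real lam) * fps_X) * fps_deriv F = fps_const (complex_of_real a) * F"
  shows "F = dexp_fps lam a"
proof (rule fps_ext)
  fix n show "F $ n = dexp_fps lam a $ n"
  proof (induction n)
    case 0 then show ?case using F0 by (simp add: dexp_nth dfall_def)
  next
    case (Suc n)
    let ?G = "dexp_fps lam a"
    have e1: "of_nat (n+1) * F $ Suc n + complex_of_real lam * of_nat n * F $ n = complex_of_real a * F $ n"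
      using arg_cong[OF ode, of "\<lambda>f. f $ n"] by (simp add: ode_nth)
    have e2: "of_nat (n+1) * ?G $ Suc n + complex_of_real lam * of_nat n * ?G $ n = complex_of_real a * ?G $ n"
      using arg_cong[OF dexp_ode[of lam a], of "\<lambda>f. f $ n"] by (simp add: ode_nth)
    have f1: "of_nat (n+1) * F $ Suc n = complex_of_real a * F $ n - complex_of_real lam * of_nat n * F $ n"
      using e1 by (rule eq_diff_eq[THEN iffD2])
    have f2: "of_nat (n+1) * ?G $ Suc n = complex_of_real a * ?G $ n - complex_of_real lam * of_nat n * ?G $ n"
      using e2 by (rule eq_diff_eq[THEN iffD2])
    have "of_nat (n+1) * F $ Suc n = of_nat (n+1) * ?G $ Suc n"
      by (simp only: f1 f2 Suc.IH)
    moreover have "(1::complex) + of_nat n \<noteq> 0"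
      using of_nat_neq_0[of n, where ?'a=complex] unfolding of_nat_Suc .
    ultimately show ?case by (subst (asm) mult_cancel_left) simp
  qed
qed

lemma dexp_add: "dexp_fps lam a * dexp_fps lam b = dexp_fps lam (a + b)"
proof (rule dexp_unique)
  show "(dexp_fps lam a * dexp_fps lam b) $ 0 = 1" by (simp add: dexp_nth dfall_def)
  let ?L = "1 + fps_const (complex_of_real lam) * fps_X"
  have "?L * fps_deriv (dexp_fps lam a * dexp_fps lam b)
     = (?L * fps_deriv (dexp_fps lam a)) * dexp_fps lam b + dexp_fps lam a * (?L * fps_deriv (dexp_fps lam b))"
    by (simp add: fps_deriv_mult algebra_simps)
  also have "\<dots> = fps_const (complex_of_real (a + b)) * (dexp_fps lam a * dexp_fps lam b)"
  proof -
    have c: "fps_const (complex_of_real (a + b)) = fps_const (complex_of_real a) + fps_const (complex_of_real b)"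
      by simp
    show ?thesis by (simp only: dexp_ode c) (simp only: algebra_simps)
  qed
  finally show "?L * fps_deriv (dexp_fps lam a * dexp_fps lam b) = fps_const (complex_of_real (a + b)) * (dexp_fps lam a * dexp_fps lam b)" .
qed

lemma dexp_pow: "dexp_fps lam (real r) * dexp_fps lam 1 ^ m = dexp_fps lam (real m + real r)"
proof (induction m)
  case 0 then show ?case by simp
next
  case (Suc m)
  have "dexp_fps lam (real r) * dexp_fps lam 1 ^ Suc m = (dexp_fps lam (real r) * dexp_fps lam 1 ^ m) * dexp_fps lam 1"
    by (simp add: algebra_simps)
  also have "\<dots> = dexp_fps lam (real (Suc m) + real r)" by (simp add: Suc.IH dexp_add algebra_simps)
  finally show ?case .
qed

lemma E1_0: "(dexp_fps lam 1 - 1) $ 0 = 0" by (simp add: dexp_nth dfall_def)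

lemma vanish: "j < k \<Longrightarrow> (D * (dexp_fps lam 1 - 1) ^ k) $ j = 0"
  unfolding fps_mult_nth
  by (intro sum.neutral ballI) (simp add: startsby_zero_power_prefix[OF E1_0])

lemma mult_trunc: "(\<And>j. j \<le> n \<Longrightarrow> A $ j = B $ j) \<Longrightarrow> (D * A) $ n = (D * B) $ n"
  unfolding fps_mult_nth by (intro sum.cong) auto




lemma mult_const_nth: "(D * (fps_const a * Q)) $ n = a * (D * Q) $ n" for D Q :: "complex fps"
proof -
  have h: "D * (fps_const a * Q) = fps_const a * (D * Q)" by (rule mult.left_commute)
  show ?thesis unfolding h by (rule fps_mult_left_const_nth)
qed

lemma mult_nat_nth: "(D * (of_nat c * Q)) $ n = of_nat c * (D * Q) $ n" for D Q :: "complex fps"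
  using mult_const_nth[of D "of_nat c" Q n] by (simp only: fps_of_nat)

lemma gf_nat:
  "complex_of_real (dfall lam (real m + real r) n)
   = (\<Sum>k\<le>n. (of_nat (fact n) * (dexp_fps lam (real r) * (dexp_fps lam 1 - 1) ^ k) $ n / of_nat (fact k))
               * complex_of_real (ffall (real m) k))"
proof -
  define E where "E = dexp_fps lam 1"
  define D where "D = dexp_fps lam (real r)"
  define P where "P k = (D * (E - 1) ^ k) $ n" for k
  have t: "(of_nat (fact n) * P k / of_nat (fact k)) * complex_of_real (ffall (real m) k)
           = of_nat (fact n) * (of_nat (m choose k) * P k)" for k
    by (simp add: ffall_nat_choose field_simps)
  have s1: "(\<Sum>k\<le>n. of_nat (m choose k) * P k) = (\<Sum>k\<le>n+m. of_nat (m choose k) * P k)"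
    by (rule sum.mono_neutral_left) (auto simp: P_def E_def vanish)
  have s2: "(\<Sum>k\<le>m. of_nat (m choose k) * P k) = (\<Sum>k\<le>n+m. of_nat (m choose k) * P k)"
    by (rule sum.mono_neutral_left) (auto simp: binomial_eq_0)
  have "E ^ m = ((E - 1) + 1) ^ m" by simp
  also have "\<dots> = (\<Sum>k\<le>m. of_nat (m choose k) * (E - 1) ^ k)"
    by (subst binomial_ring) simp
  finally have Em: "E ^ m = (\<Sum>k\<le>m. of_nat (m choose k) * (E - 1) ^ k)" .
  have s3: "(\<Sum>k\<le>m. of_nat (m choose k) * P k) = (D * E ^ m) $ n"
    unfolding Em sum_distrib_left fps_sum_nth P_def mult_nat_nth ..
  have "(D * E ^ m) $ n = complex_of_real (dfall lam (real m + real r) n / fact n)"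
    unfolding D_def E_def dexp_pow dexp_nth ..
  then have "(\<Sum>k\<le>n. (of_nat (fact n) * P k / of_nat (fact k)) * complex_of_real (ffall (real m) k))
     = complex_of_real (dfall lam (real m + real r) n)"
    unfolding t sum_distrib_left[symmetric] s1 s2[symmetric] s3 by simp
  then show ?thesis unfolding P_def D_def E_def by simp
qed

lemma Tc_eq:
  assumes "k \<le> n"
  shows "of_nat (fact n) * (dexp_fps lam (real r) * (dexp_fps lam 1 - 1) ^ k) $ n / of_nat (fact k)
         = complex_of_real (Srec lam r n k)"
proof (rule ffall_uniq[OF _ assms])
  fix j
  have "(\<Sum>k\<le>n. (of_nat (fact n) * (dexp_fps lam (real r) * (dexp_fps lam 1 - 1) ^ k) $ n / of_nat (fact k))
               * complex_of_real (ffall (real j) k))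
        = complex_of_real (dfall lam (real j + real r) n)" by (rule gf_nat[symmetric])
  also have "\<dots> = complex_of_real (\<Sum>k\<le>n. Srec lam r n k * ffall (real j) k)"
    by (simp only: Srec_eq)
  also have "\<dots> = (\<Sum>k\<le>n. complex_of_real (Srec lam r n k) * complex_of_real (ffall (real j) k))"
    by simp
  finally show "(\<Sum>k\<le>n. (of_nat (fact n) * (dexp_fps lam (real r) * (dexp_fps lam 1 - 1) ^ k) $ n / of_nat (fact k))
               * complex_of_real (ffall (real j) k))
        = (\<Sum>k\<le>n. complex_of_real (Srec lam r n k) * complex_of_real (ffall (real j) k))" .
qed




lemma braket_coef:
  assumes X: "X = (\<lambda>\<psi>. (\<lambda>m. cre (ann \<psi>) m + of_nat r * \<psi> m))"
  shows "braket (coherent z) (op_dfall lam X n (coherent z)) = complex_of_real (deg_rbell lam r n ((cmod z)^2))"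
proof -
  have Xa: "X \<phi> j = of_nat (j + r) * \<phi> j" for \<phi> j by (simp only: X X_apply)
  have "op_dfall lam X n (coherent z) = (\<lambda>m. complex_of_real (dfall lam (real m + real r) n) * coherent z m)"
    by (rule ext) (rule op_dfall_apply[where X=X and r=r, OF Xa])
  moreover have "braket (coherent z) (\<lambda>m. complex_of_real (dfall lam (real m + real r) n) * coherent z m)
      = complex_of_real (\<Sum>k\<le>n. Srec lam r n k * (cmod z ^ 2) ^ k)"
    by (rule braket_diag) (rule Srec_eq)
  ultimately show ?thesis by (simp add: deg_rbell_def deg_rstirling2_eq)
qed

lemma rhs_coef:
  "(dexp_fps lam (real r) * (fps_exp 1 oo (fps_const c * (dexp_fps lam 1 - 1)))) $ n
   = (\<Sum>i\<le>n. c ^ i * complex_of_real (Srec lam r n i)) / of_nat (fact n)"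
proof -
  define E where "E = dexp_fps lam 1"
  define D where "D = dexp_fps lam (real r)"
  define G where "G = fps_const c * (E - 1)"
  have G0: "G $ 0 = 0" by (simp add: G_def E_def dexp_nth dfall_def)
  define B where "B = (\<Sum>i\<le>n. fps_const (1 / of_nat (fact i)) * G ^ i)"
  have "(D * (fps_exp 1 oo G)) $ n = (D * B) $ n"
  proof (rule mult_trunc)
    fix j assume j: "j \<le> n"
    have "(fps_exp 1 oo G) $ j = (\<Sum>i\<le>j. 1 / of_nat (fact i) * (G ^ i) $ j)"
      by (simp add: fps_compose_nth atLeast0AtMost)
    also have "\<dots> = (\<Sum>i\<le>n. 1 / of_nat (fact i) * (G ^ i) $ j)"
      by (rule sum.mono_neutral_left) (use j startsby_zero_power_prefix[OF G0] in auto)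
    also have "\<dots> = B $ j" by (simp add: B_def fps_sum_nth)
    finally show "(fps_exp 1 oo G) $ j = B $ j" .
  qed
  also have "(D * B) $ n = (\<Sum>i\<le>n. 1 / of_nat (fact i) * (D * G ^ i) $ n)"
    unfolding B_def sum_distrib_left fps_sum_nth mult_const_nth ..
  also have "\<dots> = (\<Sum>i\<le>n. c ^ i * (of_nat (fact n) * (D * (E - 1) ^ i) $ n / of_nat (fact i)) / of_nat (fact n))"
  proof (rule sum.cong[OF refl])
    fix i
    have "G ^ i = fps_const (c ^ i) * (E - 1) ^ i" by (simp add: G_def power_mult_distrib)
    then show "1 / of_nat (fact i) * (D * G ^ i) $ n = c ^ i * (of_nat (fact n) * (D * (E - 1) ^ i) $ n / of_nat (fact i)) / of_nat (fact n)"
      by (simp add: mult_const_nth)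
  qed
  also have "\<dots> = (\<Sum>i\<le>n. c ^ i * complex_of_real (Srec lam r n i) / of_nat (fact n))"
  proof (rule sum.cong[OF refl])
    fix i assume "i \<in> {..n}"
    then have i: "i \<le> n" by simp
    show "c ^ i * (of_nat (fact n) * (D * (E - 1) ^ i) $ n / of_nat (fact i)) / of_nat (fact n)
        = c ^ i * complex_of_real (Srec lam r n i) / of_nat (fact n)"
      by (simp only: D_def E_def Tc_eq[OF i])
  qed
  finally show ?thesis by (simp add: D_def E_def G_def sum_divide_distrib)
qed

theorem theorem8:
  fixes lam :: real and r :: nat and z :: complex
  defines "X \<equiv> (\<lambda>\<psi>. (\<lambda>m. cre (ann \<psi>) m + of_nat r * \<psi> m))"
  shows "Abs_fps (\<lambda>n. complex_of_real (deg_rbell lam r n ((cmod z)^2) / fact n))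
           = Abs_fps (\<lambda>n. braket (coherent z) (op_dfall lam X n (coherent z)) / of_nat (fact n))
         \<and> Abs_fps (\<lambda>n. braket (coherent z) (op_dfall lam X n (coherent z)) / of_nat (fact n))
           = dexp_fps lam (real r)
             * (fps_exp 1 oo (fps_const (complex_of_real ((cmod z)^2)) * (dexp_fps lam 1 - 1)))"
proof -
  have X: "X = (\<lambda>\<psi>. (\<lambda>m. cre (ann \<psi>) m + of_nat r * \<psi> m))" by (simp add: X_def)
  have 1: "Abs_fps (\<lambda>n. complex_of_real (deg_rbell lam r n ((cmod z)^2) / fact n))
           = Abs_fps (\<lambda>n. braket (coherent z) (op_dfall lam X n (coherent z)) / of_nat (fact n))"
    by (simp add: braket_coef[OF X])
  have 2: "Abs_fps (\<lambda>n. complex_of_real (deg_rbell lam r n ((cmod z)^2) / fact n))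
           = dexp_fps lam (real r)
             * (fps_exp 1 oo (fps_const (complex_of_real ((cmod z)^2)) * (dexp_fps lam 1 - 1)))"
  proof (rule fps_ext)
    fix n
    show "Abs_fps (\<lambda>n. complex_of_real (deg_rbell lam r n ((cmod z)^2) / fact n)) $ n
       = (dexp_fps lam (real r) * (fps_exp 1 oo (fps_const (complex_of_real ((cmod z)^2)) * (dexp_fps lam 1 - 1)))) $ n"
      unfolding rhs_coef
      by (simp add: deg_rbell_def deg_rstirling2_eq mult.commute)
  qed
  show ?thesis using 1 2 by simp
qed

end
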